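(* Let $\mathbf{x}$ be an infinite word over a finite alphabet. Then $\mathrm{rep}(\mathbf{x})=1$ if and only if $\mathrm{dio}(\mathbf{x})=+\infty$, and $\mathrm{rep}(\mathbf{x})=+\infty$ if and only if $\mathrm{dio}(\mathbf{x})=1$. Furthermore, if $1<\mathrm{dio}(\mathbf{x})<+\infty$, then $$\mathrm{rep}(\mathbf{x})=\frac{\mathrm{dio}(\mathbf{x})}{\mathrm{dio}(\mathbf{x})-1}\le\frac{\mathrm{ice}(\mathbf{x})}{\mathrm{ice}(\mathbf{x})-1}$$ (the right-hand side being $+\infty$ if $\mathrm{ice}(\mathbf{x})=1$).
   Context: For $\mathbf{x}=x_1x_2\ldots$, $x_i^j=x_i\cdots x_j$, $r(n,\mathbf{x})=\min\{m\ge1:\ x_i^{i+n-1}=x_{m-n+1}^{m}\text{ for some } 1\le i\le m-n\}$ and $\mathrm{rep}(\mathbf{x})=\liminf_{n\to\infty}r(n,\mathbf{x})/n$. For a finite word $W$ and real $w\ge1$, $W^w$ is the concatenation of $\lfloor w\rfloor$ copies of $W$ followed by the prefix of $W$ of length $\lceil (w-\lfloor w\rfloor)|W|\rceil$. The initial critical exponent $\mathrm{ice}(\mathbf{x})$ is the supremum of the reals $\rho$ for which there are arbitrarily long prefixes $V$ of $\mathbf{x}$ such that $V^\rho$ is a prefix of $\mathbf{x}$. The Diophantine exponent $\mathrm{dio}(\mathbf{x})$ is the supremum of the reals $\rho$ for which there are arbitrarily long prefixes of $\mathbf{x}$ of the form $UV^w$, with $U,V$ finite words and $w$ real, such that $|UV^w|/|UV|\ge\rho$.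 One has $1\le\mathrm{ice}(\mathbf{x})\le\mathrm{dio}(\mathbf{x})\le+\infty$. *)

theory Defs
  imports "HOL-Analysis.Analysis"
begin

text \<open>Infinite words are functions x :: nat => 'a; the paper's letter x_i (i >= 1)
  is x (i - 1).\<close>

definition fac :: "(nat \<Rightarrow> 'a) \<Rightarrow> nat \<Rightarrow> nat \<Rightarrow> 'a list" where
  "fac x i j = map (\<lambda>k. x (k - 1)) [i..<Suc j]"

definition rfun :: "nat \<Rightarrow> (nat \<Rightarrow> 'a) \<Rightarrow> nat" where
  "rfun n x = (LEAST m. m \<ge> 1 \<and>
     (\<exists>i. 1 \<le> i \<and> i \<le> m - n \<and> fac x i (i + n - 1) = fac x (m - n + 1) m))"

definition rep :: "(nat \<Rightarrow> 'a) \<Rightarrow> ereal" where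
  "rep x = liminf (\<lambda>n. ereal (real (rfun n x) / real n))"

definition wpow :: "'a list \<Rightarrow> real \<Rightarrow> 'a list" where
  "wpow W w = concat (replicate (nat \<lfloor>w\<rfloor>) W)
      @ take (nat \<lceil>(w - of_int \<lfloor>w\<rfloor>) * real (length W)\<rceil>) W"

definition is_prefix :: "'a list \<Rightarrow> (nat \<Rightarrow> 'a) \<Rightarrow> bool" where
  "is_prefix V x \<longleftrightarrow> V = map x [0..<length V]"

definition ice :: "(nat \<Rightarrow> 'a) \<Rightarrow> ereal" where
  "ice x = Sup {ereal \<rho> | \<rho>. \<rho> \<ge> 1 \<and>
     (\<forall>N. \<exists>V. is_prefix V x \<and> length V \<ge> N \<and> is_prefix (wpow V \<rho>) x)}"

definition dio :: "(nat \<Rightarrow> 'a) \<Rightarrow> ereal" where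
  "dio x = Sup {ereal \<rho> | \<rho>. \<rho> \<ge> 1 \<and>
     (\<forall>N. \<exists>U V w. w \<ge> 1 \<and> is_prefix (U @ wpow V w) x \<and> length (U @ wpow V w) \<ge> N \<and>
        real (length (U @ wpow V w)) / real (length (U @ V)) \<ge> \<rho>)}"

end

theory Submission imports Defs begin

lemma nth_concat_replicate:
  "k < q * length V \<Longrightarrow> concat (replicate q V) ! k = V ! (k mod length V)"
proof (induction q arbitrary: k)
  case 0 then show ?case by simp
next
  case (Suc q)
  show ?case
  proof (cases "k < length V")
    case True then show ?thesis by (simp add: nth_append)
  next
    case False
    then have "concat (replicate (Suc q) V) ! k = concat (replicate q V) ! (k - length V)"
      by (simp add: nth_append)
    also have "\<dots> = V ! ((k - length V) mod length V)" using Suc False by (intro Suc.IH) auto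
    also have "(k - length V) mod length V = k mod length V" using False by (simp add: le_mod_geq)
    finally show ?thesis .
  qed
qed

lemma frac_mul_le: "(w - of_int \<lfloor>w\<rfloor>) * real (n::nat) \<le> real n"
proof (rule mult_left_le_one_le)
  show "w - of_int \<lfloor>w\<rfloor> \<le> 1" using floor_correct[of w] by linarith
  show "0 \<le> w - of_int \<lfloor>w\<rfloor>" using floor_correct[of w] by linarith
qed simp

lemma wpow_len:
  assumes "w \<ge> 0"
  shows "length (wpow V w) = nat \<lfloor>w\<rfloor> * length V + nat \<lceil>(w - of_int \<lfloor>w\<rfloor>) * real (length V)\<rceil>"
proof -
  have "(w - of_int \<lfloor>w\<rfloor>) * real (length V) \<le> real (length V)"
    by (rule frac_mul_le)
  have tle: "nat \<lceil>(w - of_int \<lfloor>w\<rfloor>) * real (length V)\<rceil> \<le> length V"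
    proof -
    have "\<lceil>(w - of_int \<lfloor>w\<rfloor>) * real (length V)\<rceil> \<le> int (length V)"
      using frac_mul_le[of w "length V"] by (simp add: ceiling_le_iff)
    then show ?thesis by (simp add: nat_le_iff)
  qed
  then show ?thesis using tle unfolding wpow_def by (simp add: length_concat sum_list_replicate min_absorb2)
qed

lemma wpow_len_ge:
  assumes "w \<ge> 0"
  shows "real (length (wpow V w)) \<ge> w * real (length V)"
proof -
  have "w * real (length V) = real_of_int \<lfloor>w\<rfloor> * length V + (w - of_int \<lfloor>w\<rfloor>) * real (length V)"
    by (simp add: algebra_simps)
  also have "\<dots> \<le> real (nat \<lfloor>w\<rfloor> * length V) + real (nat \<lceil>(w - of_int \<lfloor>w\<rfloor>) * real (length V)\<rceil>)"
    using assms by (intro add_mono) (auto simp: le_nat_iff)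
  finally show ?thesis using wpow_len[OF assms, of V] by simp
qed

lemma wpow_nth:
  assumes "w \<ge> 0" "k < length (wpow V w)"
  shows "wpow V w ! k = V ! (k mod length V)"
proof -
  define q where "q = nat \<lfloor>w\<rfloor>"
  define t where "t = nat \<lceil>(w - of_int \<lfloor>w\<rfloor>) * real (length V)\<rceil>"
  have len: "length (wpow V w) = q * length V + t" using wpow_len[OF assms(1)] q_def t_def by simp
  have t: "t \<le> length V"
  proof -
    have "(w - of_int \<lfloor>w\<rfloor>) * real (length V) \<le> real (length V)"
      by (rule frac_mul_le)
    show ?thesis proof -
    have "\<lceil>(w - of_int \<lfloor>w\<rfloor>) * real (length V)\<rceil> \<le> int (length V)"
      using frac_mul_le[of w "length V"] by (simp add: ceiling_le_iff)
    then show ?thesis by (simp add: nat_le_iff t_def)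
  qed
  qed
  have w: "wpow V w = concat (replicate q V) @ take t V" unfolding wpow_def q_def t_def by simp
  show ?thesis
  proof (cases "k < q * length V")
    case True then show ?thesis unfolding w by (simp add: nth_append nth_concat_replicate length_concat sum_list_replicate)
  next
    case False
    then have "wpow V w ! k = V ! (k - q * length V)" 
    proof -
      have lc: "length (concat (replicate q V)) = q * length V" by (simp add: length_concat sum_list_replicate)
      have "k - q * length V < t" using assms(2) len False by linarith
      then show ?thesis unfolding w using False by (simp add: nth_append lc)
    qed
    moreover have "k - q * length V < length V" using assms(2) len t False by simp
    moreover have "k mod length V = k - q * length V"
    proof -
      have "k = (k - q * length V) + q * length V" using False by simp
      moreover have "((k - q * length V) + q * length V) mod length V = (k - q * length V) mod length V" by (rule mod_mult_self1)
      ultimately have "k mod length V = (k - q * length V) mod length V" by simp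
      then show ?thesis using \<open>k - q * length V < length V\<close> by simp
    qed
    ultimately show ?thesis by simp
  qed
qed


lemma prefix_nth: "is_prefix P x \<Longrightarrow> k < length P \<Longrightarrow> x k = P ! k"
proof -
  assume a: "is_prefix P x" and k: "k < length P"
  from a have "P = map x [0..<length P]" unfolding is_prefix_def .
  then have "P ! k = map x [0..<length P] ! k" by (rule arg_cong[where f="\<lambda>l. l ! k"])
  also have "\<dots> = x k" using k by simp
  finally show ?thesis by simp
qed

lemma prefixI: "(\<And>k. k < length P \<Longrightarrow> P ! k = x k) \<Longrightarrow> is_prefix P x"
  unfolding is_prefix_def by (rule nth_equalityI) auto

lemma wpow_nil: "w \<ge> 0 \<Longrightarrow> length (wpow [] w) = 0"
  using wpow_len[of w "[]"] by simp

lemma fac_eq_shift: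
  assumes "n \<ge> 1" "\<And>t. t < n \<Longrightarrow> x (a + t) = x (b + t)"
  shows "fac x (a+1) (a + 1 + n - 1) = fac x (b+1) (b + n)"
proof -
  have "a + 1 + n - 1 = a + n" by simp
  then show ?thesis unfolding fac_def
  proof (intro nth_equalityI)
    fix i assume "i < length (map (\<lambda>k. x (k - 1)) [a + 1..<Suc (a + 1 + n - 1)])"
    then have i: "i < n" using \<open>a + 1 + n - 1 = a + n\<close> by (simp del: upt_Suc)
    then show "map (\<lambda>k. x (k - 1)) [a + 1..<Suc (a + 1 + n - 1)] ! i = map (\<lambda>k. x (k - 1)) [b + 1..<Suc (b + n)] ! i"
      using assms(2)[OF i] \<open>a + 1 + n - 1 = a + n\<close> by (simp add: nth_map_upt del: upt_Suc)
  qed (simp del: upt_Suc)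
qed

lemma rep_bound:
  assumes pre: "is_prefix (U @ wpow V w) x" and w: "w \<ge> 0"
    and lt: "length (U @ V) < length (U @ wpow V w)"
  shows "rfun (length (U @ wpow V w) - length (U @ V)) x \<le> length (U @ wpow V w)"
proof -
  define a where "a = length U"
  define p where "p = length V"
  define L where "L = length (U @ wpow V w)"
  define n where "n = L - (a + p)"
  have p: "p \<ge> 1"
  proof (rule ccontr)
    assume "\<not> p \<ge> 1" then have "V = []" using p_def by (cases V) auto
    then have "length (wpow V w) = 0" using wpow_len[OF w, of V] by simp
    then show False using lt \<open>V = []\<close> by simp
  qed
  have n: "n \<ge> 1" using lt unfolding n_def L_def a_def p_def by simp
  have Lw: "L = a + length (wpow V w)" unfolding L_def a_def by simp
  have per: "x (a + t) = x ((a + p) + t)" if t: "t < n" for t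
  proof -
    have "x (a + t) = (U @ wpow V w) ! (a + t)" using t pre n_def Lw by (intro prefix_nth) (auto simp: L_def)
    also have "\<dots> = wpow V w ! t" by (simp add: nth_append a_def)
    also have "\<dots> = V ! (t mod p)" using t n_def Lw unfolding p_def by (intro wpow_nth[OF w]) auto
    finally have 1: "x (a + t) = V ! (t mod p)" .
    have "x ((a + p) + t) = (U @ wpow V w) ! (a + (p + t))" using t pre n_def Lw
      by (subst prefix_nth[OF pre]) (auto simp: L_def add.assoc)
    also have "\<dots> = wpow V w ! (p + t)" by (simp add: nth_append a_def)
    also have "\<dots> = V ! ((p + t) mod p)" using t n_def Lw unfolding p_def by (intro wpow_nth[OF w]) auto
    finally show ?thesis using 1 by simp
  qed
  have fe: "fac x (a+1) (a + 1 + n - 1) = fac x ((a + p)+1) ((a+p) + n)"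
    using n per by (intro fac_eq_shift) auto
  have L: "L = a + p + n" using lt unfolding n_def L_def a_def p_def by simp
  have "rfun n x \<le> L" unfolding rfun_def
  proof (rule Least_le, intro conjI exI)
    show "1 \<le> L" using L n by simp
    show "1 \<le> a + 1" by simp
    show "a + 1 \<le> L - n" using L p by simp
    show "fac x (a + 1) (a + 1 + n - 1) = fac x (L - n + 1) L" using fe L by simp
  qed
  then show ?thesis unfolding n_def L_def a_def p_def by simp
qed


lemma per_mod:
  fixes x :: "nat \<Rightarrow> 'b" and a p n s :: nat
  assumes "p \<ge> 1" "\<And>t. t < n \<Longrightarrow> x (a + t + p) = x (a + t)"
  shows "s < p + n \<Longrightarrow> x (a + s) = x (a + s mod p)"
proof (induction s rule: less_induct)
  case (less s)
  show ?case
  proof (cases "s < p")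
    case True then show ?thesis by simp
  next
    case False
    then have "s - p < s" "s - p < p + n" "s - p < n" using less.prems assms(1) by auto
    then have "x (a + (s - p)) = x (a + (s - p) mod p)" using less.IH by blast
    moreover have "x (a + (s - p) + p) = x (a + (s - p))" using assms(2) \<open>s - p < n\<close> by blast
    moreover have "a + (s - p) + p = a + s" using False by simp
    moreover have "(s - p) mod p = s mod p" using False by (simp add: le_mod_geq)
    ultimately show ?thesis by simp
  qed
qed

lemma wpow_len_exact:
  assumes p: "p \<ge> 1" "length V = p"
  shows "length (wpow V (real (p + n) / real p)) = p + n"
proof -
  define q where "q = (p + n) div p"
  define r where "r = (p + n) mod p"
  have fl: "\<lfloor>real (p + n) / real p\<rfloor> = int q" unfolding q_def
    by (rule floor_divide_of_nat_eq)
  have "real (p + n) = real p * real q + real r" unfolding q_def r_def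
    by (metis div_mult_mod_eq mult.commute of_nat_add of_nat_mult)
  then have "(real (p + n) / real p - real q) * real p = real r" using p
    by (simp add: field_simps)
  then have fr: "(real (p + n) / real p - of_int \<lfloor>real (p + n) / real p\<rfloor>) * real (length V) = real r"
    using fl p by simp
  have "p + n = q * p + r" unfolding q_def r_def by (rule div_mult_mod_eq[symmetric])
  then show ?thesis using wpow_len[of "real (p + n) / real p" V] fl fr p by simp
qed

lemma build_prefix:
  assumes p: "p \<ge> 1" and per: "\<And>t. t < n \<Longrightarrow> x (a + t + p) = x (a + t)"
  shows "is_prefix (map x [0..<a] @ wpow (map x [a..<a+p]) (real (p + n) / real p)) x"
    and "length (map x [0..<a] @ wpow (map x [a..<a+p]) (real (p + n) / real p)) = a + p + n"
proof -
  let ?V = "map x [a..<a+p]"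
  let ?w = "real (p + n) / real p"
  have lw: "length (wpow ?V ?w) = p + n" using wpow_len_exact[OF p, of ?V n] by simp
  show "length (map x [0..<a] @ wpow ?V ?w) = a + p + n" using lw by simp
  show "is_prefix (map x [0..<a] @ wpow ?V ?w) x"
  proof (rule prefixI)
    fix k assume k: "k < length (map x [0..<a] @ wpow ?V ?w)"
    show "(map x [0..<a] @ wpow ?V ?w) ! k = x k"
    proof (cases "k < a")
      case True then show ?thesis by (simp add: nth_append)
    next
      case False
      then have "(map x [0..<a] @ wpow ?V ?w) ! k = wpow ?V ?w ! (k - a)" by (simp add: nth_append)
      also have "\<dots> = ?V ! ((k - a) mod length ?V)"
        using k False lw by (intro wpow_nth) auto
      also have "\<dots> = x (a + (k - a) mod p)" using p by simp
      also have "\<dots> = x (a + (k - a))" using per_mod[OF p, of n x a "k - a"] per k lw False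
        by (simp add: add.commute add.left_commute)
      finally show ?thesis using False by simp
    qed
  qed
qed


lemma rfun_exists:
  fixes x :: "nat \<Rightarrow> 'b"
  assumes fin: "finite (range x)" and n: "n \<ge> 1"
  shows "\<exists>m. m \<ge> 1 \<and> (\<exists>i. 1 \<le> i \<and> i \<le> m - n \<and> fac x i (i + n - 1) = fac x (m - n + 1) m)"
proof -
  define f where "f i = fac x i (i + n - 1)" for i
  have sub: "f ` {1..} \<subseteq> {l. set l \<subseteq> range x \<and> length l = n}"
    using n by (auto simp: f_def fac_def)
  have "finite {l. set l \<subseteq> range x \<and> length l = n}" using fin by (rule finite_lists_length_eq)
  moreover have "infinite {1::nat..}" by (rule infinite_Ici)
  ultimately have "\<not> inj_on f {1..}" using sub inj_on_finite by blast
  then obtain i j where ij: "i \<ge> 1" "j \<ge> 1" "i \<noteq> j" "f i = f j" unfolding inj_on_def by auto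
  have "\<exists>i j. 1 \<le> i \<and> i < j \<and> f i = f j"
  proof (cases "i < j")
    case True then show ?thesis using ij by blast
  next
    case False then show ?thesis using ij by (intro exI[of _ j] exI[of _ i]) auto
  qed
  then obtain i j where ij: "1 \<le> i" "i < j" "f i = f j" by blast
  show ?thesis
  proof (intro exI conjI)
    show "1 \<le> j + n - 1" using ij n by simp
    show "1 \<le> i" by fact
    show "i \<le> j + n - 1 - n" using ij n by simp
    have "j + n - 1 - n + 1 = j" using ij n by simp
    then show "fac x i (i + n - 1) = fac x (j + n - 1 - n + 1) (j + n - 1)" using ij by (simp add: f_def)
  qed
qed

lemma fac_nth: "t < Suc j - i \<Longrightarrow> fac x i j ! t = x (i + t - 1)"
  unfolding fac_def by (simp del: upt_Suc)

lemma rfun_witness: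
  fixes x :: "nat \<Rightarrow> 'b"
  assumes fin: "finite (range x)" and n: "n \<ge> 1"
  shows "n < rfun n x \<and> (\<exists>U V w. w \<ge> 1 \<and> is_prefix (U @ wpow V w) x
     \<and> length (U @ wpow V w) = rfun n x \<and> length (U @ V) = rfun n x - n)"
proof -
  define m where "m = rfun n x"
  have "m \<ge> 1 \<and> (\<exists>i. 1 \<le> i \<and> i \<le> m - n \<and> fac x i (i + n - 1) = fac x (m - n + 1) m)"
    unfolding m_def rfun_def by (rule LeastI_ex) (rule rfun_exists[OF fin n])
  then obtain i where i: "1 \<le> i" "i \<le> m - n" "fac x i (i + n - 1) = fac x (m - n + 1) m" by blast
  have mn: "n < m" using i by simp
  define a where "a = i - 1"
  define p where "p = m - n + 1 - i"
  have p: "p \<ge> 1" using i unfolding p_def by simp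
  have per: "x (a + t + p) = x (a + t)" if t: "t < n" for t
  proof -
    have "fac x i (i + n - 1) ! t = x (i + t - 1)" using t n by (intro fac_nth) simp
    moreover have "fac x (m - n + 1) m ! t = x (m - n + 1 + t - 1)" using t mn by (intro fac_nth) simp
    moreover have "i + t - 1 = a + t" "m - n + 1 + t - 1 = a + t + p" using i mn unfolding a_def p_def by auto
    ultimately show ?thesis using i(3) by (simp add: ac_simps)
  qed
  have w: "real (p + n) / real p \<ge> 1" using p by simp
  show ?thesis
  proof (intro conjI exI)
    show "n < rfun n x" using mn m_def by simp
    show "1 \<le> real (p + n) / real p" by (rule w)
    show "is_prefix (map x [0..<a] @ wpow (map x [a..<a + p]) (real (p + n) / real p)) x"
      by (rule build_prefix(1)[OF p per])
    show "length (map x [0..<a] @ wpow (map x [a..<a + p]) (real (p + n) / real p)) = rfun n x"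
    proof -
      have "length (map x [0..<a] @ wpow (map x [a..<a + p]) (real (p + n) / real p)) = a + p + n"
        by (rule build_prefix(2)[OF p per])
      moreover have "a + p + n = rfun n x" using i mn unfolding a_def p_def m_def by simp
      ultimately show ?thesis by simp
    qed
    show "length (map x [0..<a] @ map x [a..<a + p]) = rfun n x - n"
      using i mn unfolding a_def p_def m_def by simp
  qed
qed


lemma key_le: "(a::real) > 1 \<Longrightarrow> b > 1 \<Longrightarrow> b \<le> a / (a - 1) \<longleftrightarrow> a * b \<le> a + b"
  by (simp add: le_divide_eq algebra_simps)

lemma key_less: "(a::real) > 1 \<Longrightarrow> b > 1 \<Longrightarrow> b < a / (a - 1) \<longleftrightarrow> a * b < a + b"
  by (simp add: less_divide_eq algebra_simps)

lemma wpow_one: "wpow V 1 = V"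
  by (simp add: wpow_def)

lemma liminf_le_freq:
  fixes f :: "nat \<Rightarrow> ereal"
  assumes "\<And>N. \<exists>n\<ge>N. f n \<le> c"
  shows "liminf f \<le> c"
proof (rule ccontr)
  assume "\<not> liminf f \<le> c"
  then have "c < liminf f" by simp
  then have "eventually (\<lambda>n. c < f n) sequentially" by (rule less_LiminfD)
  then obtain N where "\<And>n. n \<ge> N \<Longrightarrow> c < f n" unfolding eventually_sequentially by blast
  moreover obtain n where "n \<ge> N" "f n \<le> c" using assms by blast
  ultimately show False by force
qed

lemma freq_of_liminf_less:
  fixes f :: "nat \<Rightarrow> ereal"
  assumes "liminf f < c"
  shows "\<exists>n\<ge>N. f n < c"
proof (rule ccontr)
  assume "\<not> (\<exists>n\<ge>N. f n < c)"
  then have "eventually (\<lambda>n. c \<le> f n) sequentially" unfolding eventually_sequentially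
    by (auto simp: not_less)
  then have "c \<le> liminf f" by (rule Liminf_bounded)
  then show False using assms by simp
qed


lemma rep_ge1:
  fixes x :: "nat \<Rightarrow> 'b"
  assumes fin: "finite (range x)"
  shows "1 \<le> rep x"
  unfolding rep_def
proof (rule Liminf_bounded)
  show "\<forall>\<^sub>F n in sequentially. 1 \<le> ereal (real (rfun n x) / real n)"
    unfolding eventually_sequentially
  proof (intro exI allI impI)
    fix n :: nat assume "1 \<le> n"
    then have "n < rfun n x" using rfun_witness[OF fin] by blast
    then show "1 \<le> ereal (real (rfun n x) / real n)" using \<open>1 \<le> n\<close> by simp
  qed
qed

lemma rep_le:
  fixes x :: "nat \<Rightarrow> 'b"
  assumes fin: "finite (range x)" and r1: "\<rho> > 1"
    and P: "\<forall>N. \<exists>U V w. w \<ge> 1 \<and> is_prefix (U @ wpow V w) x \<and> length (U @ wpow V w) \<ge> N \<and>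
        real (length (U @ wpow V w)) / real (length (U @ V)) \<ge> \<rho>"
  shows "rep x \<le> ereal (\<rho> / (\<rho> - 1))"
  unfolding rep_def
proof (rule liminf_le_freq)
  fix N :: nat
  define N' where "N' = nat \<lceil>real N * \<rho> / (\<rho> - 1)\<rceil>"
  obtain U V w where w: "w \<ge> 1" and pre: "is_prefix (U @ wpow V w) x"
    and LN: "length (U @ wpow V w) \<ge> N'"
    and rat: "real (length (U @ wpow V w)) / real (length (U @ V)) \<ge> \<rho>"
    using P by blast
  define L where "L = length (U @ wpow V w)"
  define K where "K = length (U @ V)"
  have K0: "K > 0"
  proof (rule ccontr)
    assume "\<not> K > 0" then have "K = 0" by simp
    then show False using rat r1 unfolding K_def by simp
  qed
  have Kp: "real K > 0" using K0 by simp
  have "\<rho> \<le> real L / real K" using rat unfolding L_def K_def .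
  then have LK: "real L \<ge> \<rho> * real K" using pos_le_divide_eq[OF Kp] by simp
  have KL: "K < L"
  proof -
    have "\<rho> * real K > real K" using r1 K0 by simp
    then show ?thesis using LK by linarith
  qed
  define n where "n = L - K"
  have rb: "rfun n x \<le> L" using rep_bound[OF pre _ ] w KL unfolding n_def L_def K_def by simp
  have nN: "n \<ge> N"
  proof -
    have "real N' \<ge> real N * \<rho> / (\<rho> - 1)" unfolding N'_def by linarith
    then have "real L \<ge> real N * \<rho> / (\<rho> - 1)" using LN unfolding L_def by linarith
    then have "real L * (\<rho> - 1) \<ge> real N * \<rho>" using r1 by (simp add: divide_le_eq)
    moreover have "real L * (\<rho> - 1) \<le> (real L - real K) * \<rho>" using LK by (simp add: algebra_simps)
    ultimately have "real N * \<rho> \<le> (real L - real K) * \<rho>" by linarith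
    then have "real N \<le> real L - real K" using r1 by simp
    then show ?thesis unfolding n_def using KL by linarith
  qed
  have n1: "n \<ge> 1" unfolding n_def using KL by simp
  have "real (rfun n x) / real n \<le> real L / real n" using rb n1 by (simp add: divide_right_mono)
  also have "\<dots> \<le> \<rho> / (\<rho> - 1)"
  proof -
    have "real L * (\<rho> - 1) \<le> \<rho> * real n" using LK KL unfolding n_def by (simp add: algebra_simps)
    then show ?thesis using n1 r1 by (simp add: divide_le_eq le_divide_eq mult.commute)
  qed
  finally show "\<exists>n\<ge>N. ereal (real (rfun n x) / real n) \<le> ereal (\<rho> / (\<rho> - 1))"
    using nN by auto
qed

lemma P_of_rep:
  fixes x :: "nat \<Rightarrow> 'b"
  assumes fin: "finite (range x)" and r1: "\<rho> > 1"
    and lt: "rep x < ereal (\<rho> / (\<rho> - 1))"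
  shows "\<forall>N. \<exists>U V w. w \<ge> 1 \<and> is_prefix (U @ wpow V w) x \<and> length (U @ wpow V w) \<ge> N \<and>
        real (length (U @ wpow V w)) / real (length (U @ V)) \<ge> \<rho>"
proof
  fix N :: nat
  obtain n where n: "n \<ge> max N 1" "ereal (real (rfun n x) / real n) < ereal (\<rho> / (\<rho> - 1))"
    using freq_of_liminf_less[OF lt[unfolded rep_def]] by blast
  have n1: "n \<ge> 1" using n by simp
  obtain U V w where W: "n < rfun n x" "w \<ge> 1" "is_prefix (U @ wpow V w) x"
     "length (U @ wpow V w) = rfun n x" "length (U @ V) = rfun n x - n"
    using rfun_witness[OF fin n1] by blast
  define R where "R = rfun n x"
  have "real R / real n < \<rho> / (\<rho> - 1)" using n unfolding R_def by simp
  then have "real R * (\<rho> - 1) < \<rho> * real n" using n1 r1 by (simp add: divide_less_eq less_divide_eq mult.commute)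
  then have "\<rho> * (real R - real n) \<le> real R" by (simp add: algebra_simps)
  moreover have "real R - real n > 0" using W(1) unfolding R_def by simp
  ultimately have "\<rho> \<le> real R / (real R - real n)" by (simp add: le_divide_eq mult.commute)
  moreover have "real (rfun n x - n) = real R - real n" using W(1) unfolding R_def by simp
  ultimately have "real (length (U @ wpow V w)) / real (length (U @ V)) \<ge> \<rho>"
    using W unfolding R_def by simp
  moreover have "length (U @ wpow V w) \<ge> N" using W n by simp
  ultimately show "\<exists>U V w. w \<ge> 1 \<and> is_prefix (U @ wpow V w) x \<and> length (U @ wpow V w) \<ge> N \<and>
        real (length (U @ wpow V w)) / real (length (U @ V)) \<ge> \<rho>" using W by blast
qed


lemma ereal_g: "a \<noteq> 1 \<Longrightarrow> ereal a / (ereal a - 1) = ereal (a / (a - 1))"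
proof -
  assume "a \<noteq> 1"
  have "ereal a - 1 = ereal (a - 1)" by (simp add: one_ereal_def)
  then show ?thesis using \<open>a \<noteq> 1\<close> by simp
qed

lemma mid1: "(a::real) < b \<Longrightarrow> a < (a + b) / 2" by simp
lemma mid2: "(a::real) < b \<Longrightarrow> (a + b) / 2 < b" by simp

theorem lemma9p3:
  fixes x :: "nat \<Rightarrow> 'a"
  assumes "finite (range x)"
  shows "(rep x = 1 \<longleftrightarrow> dio x = \<infinity>)
       \<and> (rep x = \<infinity> \<longleftrightarrow> dio x = 1)
       \<and> (1 < dio x \<and> dio x < \<infinity> \<longrightarrow>
            rep x = dio x / (dio x - 1)
            \<and> rep x \<le> (if ice x = 1 then \<infinity> else ice x / (ice x - 1)))"
proof -
  note fin = assms
  define Pd where "Pd \<rho> \<longleftrightarrow> \<rho> \<ge> 1 \<and> (\<forall>N. \<exists>U V w. w \<ge> 1 \<and> is_prefix (U @ wpow V w) x \<and> length (U @ wpow V w) \<ge> N \<and>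
        real (length (U @ wpow V w)) / real (length (U @ V)) \<ge> \<rho>)" for \<rho>
  define Pi where "Pi \<rho> \<longleftrightarrow> \<rho> \<ge> 1 \<and>
     (\<forall>N. \<exists>V. is_prefix V x \<and> length V \<ge> N \<and> is_prefix (wpow V \<rho>) x)" for \<rho>
  have dio_eq: "dio x = Sup {ereal \<rho> | \<rho>. Pd \<rho>}" unfolding dio_def Pd_def by simp
  have ice_eq: "ice x = Sup {ereal \<rho> | \<rho>. Pi \<rho>}" unfolding ice_def Pi_def by simp
  have S1: "ereal \<rho> \<le> dio x" if "Pd \<rho>" for \<rho> unfolding dio_eq using that by (intro Sup_upper) blast
  have S2: "dio x \<le> c" if "\<And>\<rho>. Pd \<rho> \<Longrightarrow> ereal \<rho> \<le> c" for c unfolding dio_eq using that by (intro Sup_least) blast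
  have S3: "\<exists>\<rho>. Pd \<rho> \<and> c < ereal \<rho>" if "c < dio x" for c using that unfolding dio_eq less_Sup_iff by blast
  have I: "rep x \<le> ereal (\<rho> / (\<rho> - 1))" if "Pd \<rho>" "\<rho> > 1" for \<rho>
    using rep_le[OF fin, of \<rho>] that unfolding Pd_def by blast
  have II: "Pd \<rho>" if "\<rho> > 1" "rep x < ereal (\<rho> / (\<rho> - 1))" for \<rho>
    using P_of_rep[OF fin that] that unfolding Pd_def by simp
  have r1: "1 \<le> rep x" by (rule rep_ge1[OF fin])
  have Pd1: "Pd 1" unfolding Pd_def
  proof (intro conjI allI order.refl)
    fix N
    show "\<exists>U V w. w \<ge> 1 \<and> is_prefix (U @ wpow V w) x \<and> length (U @ wpow V w) \<ge> N \<and>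
        real (length (U @ wpow V w)) / real (length (U @ V)) \<ge> 1"
      by (rule exI[of _ "map x [0..<Suc N]"], rule exI[of _ "[]"], rule exI[of _ 1])
         (auto simp: wpow_one is_prefix_def)
  qed
  have d1: "1 \<le> dio x" using S1[OF Pd1] by (simp add: one_ereal_def)
  have Pd_ge: "\<rho> \<ge> 1" if "Pd \<rho>" for \<rho> using that unfolding Pd_def by simp
  have g1: "\<rho> / (\<rho> - 1) > 1" if "\<rho> > 1" for \<rho> :: real using that by (simp add: less_divide_eq)

  have A1: "rep x = 1 \<Longrightarrow> dio x = \<infinity>"
  proof -
    assume r: "rep x = 1"
    have big: "ereal M < dio x" for M
    proof -
      define \<rho> where "\<rho> = max M 1 + 1"
      have "\<rho> > 1" unfolding \<rho>_def by simp
      then have "Pd \<rho>" using g1[of \<rho>] r by (intro II) auto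
      then have "ereal \<rho> \<le> dio x" by (rule S1)
      moreover have "ereal M < ereal \<rho>" unfolding \<rho>_def by simp
      ultimately show ?thesis using less_le_trans by blast
    qed
    show "dio x = \<infinity>"
    proof (cases "dio x")
      case (real e) then show ?thesis using big[of e] by simp
    next
      case MInf then show ?thesis using d1 by simp
    qed simp
  qed
  have A2: "dio x = \<infinity> \<Longrightarrow> rep x = 1"
  proof (rule ccontr)
    assume d: "dio x = \<infinity>" and ne: "rep x \<noteq> 1"
    show False
    proof (cases "rep x")
      case PInf
      have "ereal 1 < dio x" using d by simp
      then obtain \<rho> where "Pd \<rho>" "1 < \<rho>" using S3 by force
      then show False using I PInf by force
    next
      case (real s)
      have s1: "s > 1" using r1 ne real by simp
      have "ereal (s / (s - 1)) < dio x" using d by simp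
      then obtain \<rho> where \<rho>: "Pd \<rho>" "s / (s - 1) < \<rho>" using S3 by force
      have \<rho>1: "\<rho> > 1" using \<rho>(2) g1[OF s1] by simp
      have "s \<le> \<rho> / (\<rho> - 1)" using I[OF \<rho>(1) \<rho>1] real by simp
      then have "\<rho> * s \<le> \<rho> + s" using key_le[OF \<rho>1 s1] by simp
      then have "\<rho> \<le> s / (s - 1)" using key_le[OF s1 \<rho>1] by (simp add: algebra_simps)
      then show False using \<rho>(2) by simp
    next
      case MInf then show False using r1 by simp
    qed
  qed
  have B1: "rep x = \<infinity> \<Longrightarrow> dio x = 1"
  proof -
    assume r: "rep x = \<infinity>"
    have "dio x \<le> 1"
    proof (rule S2)
      fix \<rho> assume P: "Pd \<rho>"
      show "ereal \<rho> \<le> 1"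
      proof (rule ccontr)
        assume "\<not> ereal \<rho> \<le> 1" then have "\<rho> > 1" by simp
        then show False using I[OF P] r by simp
      qed
    qed
    then show "dio x = 1" using d1 by simp
  qed
  have B2: "dio x = 1 \<Longrightarrow> rep x = \<infinity>"
  proof (rule ccontr)
    assume d: "dio x = 1" and ne: "rep x \<noteq> \<infinity>"
    show False
    proof (cases "rep x")
      case (real s)
      have "s \<noteq> 1" using A1 d real by auto
      then have s1: "s > 1" using r1 real by simp
      define \<rho> where "\<rho> = (1 + s / (s - 1)) / 2"
      have \<rho>1a: "\<rho> > 1" using mid1[OF g1[OF s1]] unfolding \<rho>_def by blast
      have \<rho>1b: "\<rho> < s / (s - 1)" using mid2[OF g1[OF s1]] unfolding \<rho>_def by blast
      note \<rho>1 = \<rho>1a \<rho>1b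
      then have "\<rho> * s < \<rho> + s" using key_less[OF s1 \<rho>1(1)] by (simp add: algebra_simps)
      then have "s < \<rho> / (\<rho> - 1)" using key_less[OF \<rho>1(1) s1] by simp
      then have "Pd \<rho>" using real by (intro II[OF \<rho>1(1)]) simp
      then have "ereal \<rho> \<le> dio x" by (rule S1)
      then show False using d \<rho>1 by simp
    next
      case MInf then show False using r1 by simp
    qed (use ne in simp)
  qed
  have C: "rep x = dio x / (dio x - 1) \<and> rep x \<le> (if ice x = 1 then \<infinity> else ice x / (ice x - 1))"
    if dd: "1 < dio x" "dio x < \<infinity>"
  proof -
    obtain e where e: "dio x = ereal e" using dd by (cases "dio x") auto
    have e1: "e > 1" using dd e by simp
    have "rep x \<noteq> \<infinity>" using B1 dd by auto
    moreover have "rep x \<noteq> 1" using A1 dd by auto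
    ultimately obtain s where s: "rep x = ereal s" "s > 1" using r1 by (cases "rep x") auto
    have le1: "e \<le> s / (s - 1)"
    proof -
      have "dio x \<le> ereal (s / (s - 1))"
      proof (rule S2)
        fix \<rho> assume P: "Pd \<rho>"
        show "ereal \<rho> \<le> ereal (s / (s - 1))"
        proof (cases "\<rho> > 1")
          case True
          have "s \<le> \<rho> / (\<rho> - 1)" using I[OF P True] s by simp
          then have "\<rho> * s \<le> \<rho> + s" using key_le[OF True s(2)] by simp
          then have "\<rho> \<le> s / (s - 1)" using key_le[OF s(2) True] by (simp add: algebra_simps)
          then show ?thesis by simp
        next
          case False then show ?thesis using g1[OF s(2)] by simp
        qed
      qed
      then show ?thesis using e by simp
    qed
    have le2: "s / (s - 1) \<le> e"
    proof (rule ccontr)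
      assume "\<not> s / (s - 1) \<le> e"
      then have lt: "e < s / (s - 1)" by simp
      define \<rho> where "\<rho> = (e + s / (s - 1)) / 2"
      have \<rho>1c: "\<rho> > e" using mid1[OF lt] unfolding \<rho>_def by blast
      have \<rho>1a: "\<rho> > 1" using \<rho>1c e1 by linarith
      have \<rho>1b: "\<rho> < s / (s - 1)" using mid2[OF lt] unfolding \<rho>_def by blast
      note \<rho>1 = \<rho>1a \<rho>1b \<rho>1c
      then have "\<rho> * s < \<rho> + s" using key_less[OF s(2) \<rho>1(1)] by (simp add: algebra_simps)
      then have "s < \<rho> / (\<rho> - 1)" using key_less[OF \<rho>1(1) s(2)] by simp
      then have "Pd \<rho>" using s by (intro II[OF \<rho>1(1)]) simp
      then have "ereal \<rho> \<le> dio x" by (rule S1)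
      then show False using e \<rho>1 by simp
    qed
    have es: "e = s / (s - 1)" using le1 le2 by simp
    then have se: "s = e / (e - 1)" using s(2) e1 by (simp add: field_simps)
    have part1: "rep x = dio x / (dio x - 1)" using s e se e1 ereal_g[of e] by simp
    have Pi_Pd: "Pd \<rho>" if Pir: "Pi \<rho>" for \<rho>
      unfolding Pd_def
    proof (intro conjI allI)
      show "\<rho> \<ge> 1" using Pir unfolding Pi_def by simp
      fix N
      obtain V where V: "is_prefix V x" "length V \<ge> max N 1" "is_prefix (wpow V \<rho>) x"
        using Pir unfolding Pi_def by blast
      have \<rho>1: "\<rho> \<ge> 1" using Pir unfolding Pi_def by simp
      have lw: "real (length (wpow V \<rho>)) \<ge> \<rho> * real (length V)" using \<rho>1 by (intro wpow_len_ge) simp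
      have Vp: "real (length V) > 0" using V by (cases V) auto
      have "real (length V) \<le> \<rho> * real (length V)" using \<rho>1 Vp by simp
      then have "length (wpow V \<rho>) \<ge> N" using lw V(2) by linarith
      moreover have "real (length (wpow V \<rho>)) / real (length V) \<ge> \<rho>"
        using lw Vp by (simp add: pos_le_divide_eq)
      ultimately show "\<exists>U V w. w \<ge> 1 \<and> is_prefix (U @ wpow V w) x \<and> length (U @ wpow V w) \<ge> N \<and>
        real (length (U @ wpow V w)) / real (length (U @ V)) \<ge> \<rho>"
        using V \<rho>1 by (intro exI[of _ "[]"] exI[of _ V] exI[of _ \<rho>]) simp
    qed
    have Pi1: "Pi 1" unfolding Pi_def
      by (auto simp: wpow_one intro!: exI[of _ "map x [0..<N]" for N] simp: is_prefix_def)
    have i1: "1 \<le> ice x" unfolding ice_eq using Pi1 by (intro Sup_upper2[of "ereal 1"]) auto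
    have ile: "ice x \<le> dio x" unfolding ice_eq
    proof (rule Sup_least)
      fix y assume "y \<in> {ereal \<rho> |\<rho>. Pi \<rho>}"
      then obtain \<rho> where "y = ereal \<rho>" "Pi \<rho>" by blast
      then show "y \<le> dio x" using S1 Pi_Pd by simp
    qed
    have part2: "rep x \<le> (if ice x = 1 then \<infinity> else ice x / (ice x - 1))"
    proof (cases "ice x = 1")
      case True then show ?thesis by simp
    next
      case False
      obtain c where c: "ice x = ereal c" using ile i1 e by (cases "ice x") auto
      have c1: "1 < c" "c \<le> e" using c i1 False ile e by auto
      have "s \<le> c / (c - 1)"
      proof -
        have "e * s = e + s" using es e1 s(2) by (simp add: field_simps)
        moreover have "c * (s - 1) \<le> e * (s - 1)" using c1 s(2) by (intro mult_right_mono) auto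
        then have "c * s - c \<le> e * s - e" by (simp add: algebra_simps)
        ultimately have "c * s \<le> c + s" by linarith
        then show ?thesis using key_le[OF c1(1) s(2)] by simp
      qed
      then show ?thesis using False c s c1 ereal_g[of c] by simp
    qed
    show ?thesis using part1 part2 by simp
  qed
  show ?thesis using A1 A2 B1 B2 C by blast
qed

end
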